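(* Let $K_c=\operatorname{conv}\big(\mathbb{S}^{d-1}\cup\{\boldsymbol v_i\mid i\in I\}\big)\subset\mathbb{E}^d$ be a cap body, let $i\in I$, and let $S_i=\operatorname{bd}\operatorname{conv}(\mathbb{S}^{d-1}\cup\{\boldsymbol v_i\})\setminus\mathbb{S}^{d-1}$ be the spike of the vertex $\boldsymbol v_i$. Then a direction $\boldsymbol u\in\mathbb{S}^{d-1}$ illuminates every point of $S_i$ if and only if $\boldsymbol u$ illuminates the vertex $\boldsymbol v_i$.
   Context: $\mathbb{S}^{d-1}$ is the unit sphere centred at the origin and $B^d$ the closed unit ball. A cap body is $\operatorname{conv}(\mathbb{S}^{d-1}\cup\{\boldsymbol v_i\mid i\in I\})$ where $\{\boldsymbol v_i\}$ is a countable subset of $\mathbb{E}^d\setminus B^d$ such that for distinct $i,j$ the segment $\overline{\boldsymbol v_i\boldsymbol v_j}$ intersects $B^d$; the $\boldsymbol v_i$ are its vertices. A direction $\boldsymbol u\in\mathbb{S}^{d-1}$ illuminates a boundary point $\boldsymbol p$ of the convex body $K_c$ if $\boldsymbol p+\lambda\boldsymbol u$ is in the interior of $K_c$ for some $\lambda>0$. *)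

theory Defs
  imports "HOL-Analysis.Analysis"
begin

definition cap_vertices :: "'a::euclidean_space set \<Rightarrow> bool" where
  "cap_vertices V \<longleftrightarrow> countable V \<and> V \<inter> cball 0 1 = {} \<and>
     (\<forall>v\<in>V. \<forall>w\<in>V. v \<noteq> w \<longrightarrow> closed_segment v w \<inter> cball 0 1 \<noteq> {})"

definition cap_body :: "'a::euclidean_space set \<Rightarrow> 'a set" where
  "cap_body V = convex hull (sphere 0 1 \<union> V)"

definition spike :: "'a::euclidean_space \<Rightarrow> 'a set" where
  "spike v = frontier (convex hull (sphere 0 1 \<union> {v})) - sphere 0 1"

definition illuminates :: "'a::euclidean_space set \<Rightarrow> 'a \<Rightarrow> 'a \<Rightarrow> bool" where
  "illuminates K u p \<longleftrightarrow> (\<exists>t>0. p + t *\<^sub>R u \<in> interior K)"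

end

theory Submission
  imports Defs
begin

lemma cball_sub_hull_sphere:
  fixes x :: "'a::euclidean_space"
  assumes "norm x \<le> 1"
  shows "x \<in> convex hull (sphere 0 1)"
proof -
  obtain w :: 'a where w: "norm w = 1" "x = norm x *\<^sub>R w"
  proof (cases "x = 0")
    case True
    obtain b :: 'a where "b \<in> Basis" using nonempty_Basis by blast
    then show ?thesis using that[of b] True by auto
  next
    case False
    then show ?thesis using that[of "x /\<^sub>R norm x"] by auto
  qed
  define a where "a = (1 + norm x) / 2"
  have a: "0 \<le> a" "a \<le> 1" using assms by (auto simp: a_def)
  have "x = (1 - a) *\<^sub>R (-w) + a *\<^sub>R w"
    proof -
    have "(1 - a) *\<^sub>R (-w) + a *\<^sub>R w = (-(1 - a) + a) *\<^sub>R w" by (simp only: scaleR_add_left scaleR_minus_left scaleR_minus_right)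
    also have "-(1 - a) + a = 2 * a - 1" by simp
    finally have "(1 - a) *\<^sub>R (-w) + a *\<^sub>R w = (2 * a - 1) *\<^sub>R w" .
    also have "2 * a - 1 = norm x" by (simp add: a_def field_simps)
    finally show ?thesis using w(2) by simp
  qed
  hence "x \<in> closed_segment (-w) w" using a unfolding closed_segment_def by blast
  hence "x \<in> convex hull {-w, w}" by (simp add: segment_convex_hull)
  moreover have "convex hull {-w, w} \<subseteq> convex hull (sphere 0 1)"
    by (rule hull_mono) (use w in auto)
  ultimately show ?thesis by blast
qed

theorem lemma3:
  fixes V :: "'a::euclidean_space set" and v u :: 'a
  assumes "cap_vertices V"
    and "v \<in> V"
    and "u \<in> sphere 0 1"
  shows "(\<forall>p\<in>spike v. illuminates (cap_body V) u p) \<longleftrightarrow> illuminates (cap_body V) u v"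
proof -
  define C where "C = convex hull (sphere 0 1 \<union> {v})"
  define K where "K = cap_body V"
  have nv: "norm v > 1" using assms(1,2) unfolding cap_vertices_def by auto
  have CK: "C \<subseteq> K" unfolding C_def K_def cap_body_def by (rule hull_mono) (use assms(2) in auto)
  have cballC: "cball 0 1 \<subseteq> C"
  proof
    fix x :: 'a assume "x \<in> cball 0 1"
    hence "x \<in> convex hull (sphere 0 1)" using cball_sub_hull_sphere by auto
    moreover have "convex hull (sphere 0 1) \<subseteq> C" unfolding C_def by (rule hull_mono) auto
    ultimately show "x \<in> C" by blast
  qed
  have cpt: "compact C" unfolding C_def
    by (rule compact_convex_hull) (simp add: compact_Un)
  have Csub: "C \<subseteq> cball 0 (norm v)" unfolding C_def
    by (rule hull_minimal) (use nv in auto)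
  have vspike: "v \<in> spike v"
  proof -
    have "v \<in> C" unfolding C_def by (rule hull_inc) auto
    moreover have "interior C \<subseteq> ball 0 (norm v)"
      using interior_mono[OF Csub] by simp
    ultimately have "v \<in> frontier C" using cpt
      by (auto simp: frontier_def compact_imp_closed)
    thus ?thesis unfolding spike_def C_def using nv by auto
  qed
  show ?thesis
  proof
    assume "\<forall>p\<in>spike v. illuminates (cap_body V) u p"
    thus "illuminates (cap_body V) u v" using vspike by blast
  next
    assume "illuminates (cap_body V) u v"
    then obtain t where t: "t > 0" "v + t *\<^sub>R u \<in> interior K"
      unfolding illuminates_def K_def by blast
    show "\<forall>p\<in>spike v. illuminates (cap_body V) u p"
    proof
      fix p assume p: "p \<in> spike v"
      hence pf: "p \<in> frontier C" and ps: "p \<notin> sphere 0 1" unfolding spike_def C_def by auto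
      have "ball 0 1 \<subseteq> interior C"
        using cballC by (intro interior_maximal) auto
      hence "p \<notin> ball 0 1" using pf by (auto simp: frontier_def)
      with ps have pn: "norm p > 1" by auto
      have pC: "p \<in> C" using pf cpt by (auto simp: frontier_def compact_imp_closed)
      have "sphere (0::'a) 1 \<noteq> {}" by simp
      then obtain a b q where abq: "a \<ge> 0" "b \<ge> 0" "a + b = 1" "q \<in> convex hull (sphere 0 1)"
          "p = a *\<^sub>R v + b *\<^sub>R q"
        using pC unfolding C_def using convex_hull_insert[of "sphere 0 1" v] by auto
      have "convex hull (sphere 0 1) \<subseteq> cball (0::'a) 1"
        by (rule hull_minimal) auto
      hence qb: "q \<in> cball 0 1" using abq by auto
      have "q \<in> K" using qb cballC CK by auto
      hence qK: "q \<in> closure K" using closure_subset by blast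
      have cK: "convex K" unfolding K_def cap_body_def by simp
      have a0: "a > 0"
      proof (rule ccontr)
        assume "\<not> a > 0"
        hence "a = 0" "b = 1" using abq by auto
        hence "p = q" using abq by simp
        thus False using qb pn by auto
      qed
      have "p + (a * t) *\<^sub>R u \<in> interior K"
      proof (cases "b = 0")
        case True
        hence "a = 1" using abq by simp
        hence "p = v" using True abq by simp
        thus ?thesis using \<open>a = 1\<close> t by simp
      next
        case False
        have "p + (a * t) *\<^sub>R u = (1 - b) *\<^sub>R (v + t *\<^sub>R u) + b *\<^sub>R q"
        proof -
          have "a = 1 - b" using abq by simp
          show ?thesis unfolding abq(5) \<open>a = 1 - b\<close> by (simp add: algebra_simps)
        qed
        moreover have "b < 1" using a0 abq by simp
        hence "(1 - b) *\<^sub>R (v + t *\<^sub>R u) + b *\<^sub>R q \<in> closed_segment (v + t *\<^sub>R u) q"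
          using abq unfolding closed_segment_def by auto
        ultimately have m: "p + (a * t) *\<^sub>R u \<in> closed_segment (v + t *\<^sub>R u) q" by simp
        show ?thesis
        proof (cases "p + (a * t) *\<^sub>R u = q")
          case True
          have "b = 1 - a" using abq by simp
          have "a *\<^sub>R (v + t *\<^sub>R u - q) = p + (a * t) *\<^sub>R u - q"
            unfolding abq(5) \<open>b = 1 - a\<close> by (simp add: algebra_simps)
          hence "norm (a *\<^sub>R (v + t *\<^sub>R u - q)) = 0" using True by simp
          hence "v + t *\<^sub>R u = q" using a0 by simp
          thus ?thesis using True t by simp
        next
          case False
          show ?thesis
          proof (cases "p + (a * t) *\<^sub>R u = v + t *\<^sub>R u")
            case True thus ?thesis using t by simp
          next
            case F2: False
            have "p + (a * t) *\<^sub>R u \<in> open_segment (v + t *\<^sub>R u) q"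
              using m False F2 by (simp add: open_segment_def)
            thus ?thesis using in_interior_closure_convex_segment[OF cK t(2) qK] by blast
          qed
        qed
      qed
      moreover have "a * t > 0" using a0 t by simp
      ultimately show "illuminates (cap_body V) u p"
        unfolding illuminates_def K_def by blast
    qed
  qed
qed

end
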